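(* Let $(g_0,\mathbf e)$ be a generalized $\mathcal{G}$-coding with terminal vertex sequence $(z_k)$ (with $z_0=\iota(e_1)$) and associated quasi-geodesic sequence $(g_k)_{k\ge0}$. Then for every $k$ (with $k+1$ in the index set), $g_{k+1}W(z_{k+1})\subsetneq g_kW(z_k)$. Moreover, no element of $\Gamma$ appears in the sequence $(g_k)$ more than $\#Z$ times.
   Context: Setup. $\Gamma$ is a finitely generated group hyperbolic relative to a finite nonempty collection $\mathcal{P}$ of infinite subgroups, with $(\Gamma,\mathcal{P})$ non-elementary, and $\mathcal{S}$ a finite symmetric generating set with $P\cap\mathcal{S}$ generating $P$ for each $P\in\mathcal{P}$. $X$ is the Groves–Manning cusped space (the Cayley graph with combinatorial horoballs glued along the cosets $gP$), a locally finite graph with unit edges, metric $d_X$, $\delta$-hyperbolic for a fixed integer $\delta\ge1$; $|g|_X=d_X(\mathrm{id},g)$. Its Gromov boundary is the Bowditch boundary $\partial(\Gamma,\mathcal{P})$, with a fixed metric $d_\partial$ (balls $B_r$, neighborhoods $N_r$, closed neighborhoods $\overline N_r$, $\operatorname{diam}$ w.r.t. $d_\partial$). $\Pi$ is the finite set of points fixed by groups in $\mathcal{P}$, $\Gamma_p$ the group fixing $p\in\Pi$; translates $gp$ are parabolic points, and all other boundary points are conical limit points. $D>0$ is such that any distinct $x,y$ have some $g\in\Gamma$ with $d_\partial(gx,gy)>D$; for $p\in\Pi$, $K_p\subset\partial(\Gamma,\mathcal{P})\setminus\{p\}$ is compact with $\Gamma_pK_p=\partial(\Gamma,\mathcal{P})\setminus\{p\}$,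 and $D_\Pi>0$ satisfies $D_\Pi<\operatorname{diam}K_p$, $D_\Pi<d_\partial(K_p,p)$ for all $p$. Automaton. Fix $0<\varepsilon<\min(D/5,D_\Pi/5)$, a finite set $Z\subset\partial(\Gamma,\mathcal{P})$, and for each $z\in Z$ open sets $V(z),W(z),\hat V(z),\hat W(z)$ and a set $L(z)\subset\Gamma$ such that: if $z$ is conical, $L(z)=\{\alpha_z\}$, $\hat V(z)=\alpha_z^{-1}V(z)$, $\hat W(z)=\alpha_z^{-1}W(z)$; if $z=gp$ is parabolic ($p\in\Pi$), then $L(z)=g\Gamma_p\setminus F_z$ for a finite set $F_z$, $\hat V(z)\subset\hat W(z)\subset\partial(\Gamma,\mathcal{P})\setminus\{p\}$ and $p\notin\overline N_\varepsilon(\hat W(z))$; the sets $V(z)$, $z\in Z$, cover $\partial(\Gamma,\mathcal{P})$; and for all $z\in Z$: (C1) $\operatorname{diam}W(z)<\varepsilon$; (C2) $\operatorname{diam}\hat W(z)>4\varepsilon$; (C3) $\overline N_{2\varepsilon}(\hat V(z))\subset\hat W(z)$; (C4) $W(z)=\{z\}\cup\bigcup_{\alpha\in L(z)}\alpha\hat W(z)$; (C5) $V(z)=\{z\}\cup\bigcup_{\alpha\in L(z)}\alpha\hat V(z)$ and $\overline{V(z)}\subset W(z)$; (C6) for all $y,z\in Z$, $\overline{\hat V(z)}\cap\overline{V(y)}=\emptyset$ iff $\hat V(z)\cap V(y)=\emptyset$. The automaton $\mathcal{G}$ is the directed graph with vertex set $Z$ where, for $y,z\in Z$, there is no edge from $z$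 to $y$ if $\hat V(z)\cap V(y)=\emptyset$, and otherwise there is exactly one edge from $z$ to $y$ labeled $\alpha$ for each $\alpha\in L(z)$. For an edge $e$, $\iota(e),\tau(e),\mathrm{Lab}(e)$ denote its initial vertex, terminal vertex and label. Codings. A strict conical coding is an infinite edge path $\mathbf e=(e_k)_{k\ge1}$ in $\mathcal{G}$; writing $\alpha_k=\mathrm{Lab}(e_k)$, $z_k=\tau(e_k)$ ($k\ge1$), $z_0=\iota(e_1)$, it is a strict coding of $\zeta$ if $\zeta\in\bigcap_{k\ge0}\alpha_1\cdots\alpha_k\overline{W(z_k)}$. A strict parabolic coding is a finite edge path $e_1,\dots,e_n$ ($n\ge0$) whose final vertex $q$ is parabolic; it is a strict coding of $\zeta$ if $\zeta=\alpha_1\cdots\alpha_nq$. A generalized coding is a pair $(g_0,\mathbf e)$ with $g_0\in\Gamma$ and $\mathbf e$ a strict coding (conical or parabolic); if $\mathbf e$ codes $\xi$, then $(g_0,\mathbf e)$ codes $g_0\xi$. Its label/terminal vertex sequences are those of $\mathbf e$, and its associated quasi-geodesic sequence is $g_k:=g_0\alpha_1\cdots\alpha_k$, $k\ge0$. *)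

theory Defs
  imports "HOL-Analysis.Analysis" "HOL-Algebra.Group_Action"
begin

definition Ncl :: "real \<Rightarrow> 'b::metric_space set \<Rightarrow> 'b set" where
  "Ncl r A = {x. A \<noteq> {} \<and> infdist x A \<le> r}"

definition stab :: "('g, 'm) monoid_scheme \<Rightarrow> ('g \<Rightarrow> 'b \<Rightarrow> 'b) \<Rightarrow> 'b \<Rightarrow> 'g set" where
  "stab G phi p = {g \<in> carrier G. phi g p = p}"

text \<open>Parabolic points: translates of the points in PP. All other points are conical.\<close>
definition parabolic_pt :: "('g, 'm) monoid_scheme \<Rightarrow> ('g \<Rightarrow> 'b \<Rightarrow> 'b) \<Rightarrow> 'b set \<Rightarrow> 'b \<Rightarrow> bool" where
  "parabolic_pt G phi PP z \<longleftrightarrow> (\<exists>g\<in>carrier G. \<exists>p\<in>PP. z = phi g p)"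

text \<open>Standing hypotheses on the boundary action (abstracting the relatively hyperbolic setup):
  G acts on the compact metric space UNIV (the Bowditch boundary) by homeomorphisms,
  PP is the finite nonempty set of points fixed by the peripheral subgroups, with infinite stabilisers,
  and the constants D, K_p, D_Pi are as in the setup.\<close>
definition boundary_setup ::
  "('g, 'm) monoid_scheme \<Rightarrow> ('g \<Rightarrow> 'b::metric_space \<Rightarrow> 'b) \<Rightarrow> 'b set \<Rightarrow> real
     \<Rightarrow> ('b \<Rightarrow> 'b set) \<Rightarrow> real \<Rightarrow> bool" where
  "boundary_setup G phi PP D K DPi \<longleftrightarrow>
     group G \<and> group_action G UNIV phi \<and> compact (UNIV :: 'b set) \<and>
     (\<forall>g\<in>carrier G. continuous_on UNIV (phi g)) \<and>
     finite PP \<and> PP \<noteq> {} \<and> (\<forall>p\<in>PP. infinite (stab G phi p)) \<and>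
     D > 0 \<and> (\<forall>x y. x \<noteq> y \<longrightarrow> (\<exists>g\<in>carrier G. dist (phi g x) (phi g y) > D)) \<and>
     DPi > 0 \<and>
     (\<forall>p\<in>PP. compact (K p) \<and> p \<notin> K p \<and>
        (\<Union>g\<in>stab G phi p. phi g ` K p) = UNIV - {p} \<and>
        DPi < diameter (K p) \<and> DPi < infdist p (K p))"

definition automaton_data ::
  "('g, 'm) monoid_scheme \<Rightarrow> ('g \<Rightarrow> 'b::metric_space \<Rightarrow> 'b) \<Rightarrow> 'b set \<Rightarrow> real \<Rightarrow> real \<Rightarrow> real
     \<Rightarrow> 'b set \<Rightarrow> ('b \<Rightarrow> 'g set) \<Rightarrow> ('b \<Rightarrow> 'b set) \<Rightarrow> ('b \<Rightarrow> 'b set)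
     \<Rightarrow> ('b \<Rightarrow> 'b set) \<Rightarrow> ('b \<Rightarrow> 'b set) \<Rightarrow> bool" where
  "automaton_data G phi PP D DPi \<epsilon> Z L V W Vh Wh \<longleftrightarrow>
     0 < \<epsilon> \<and> \<epsilon> < D / 5 \<and> \<epsilon> < DPi / 5 \<and> finite Z \<and>
     (\<forall>z\<in>Z. open (V z) \<and> open (W z) \<and> open (Vh z) \<and> open (Wh z) \<and> L z \<subseteq> carrier G) \<and>
     (\<forall>z\<in>Z. \<not> parabolic_pt G phi PP z \<longrightarrow>
        (\<exists>a\<in>carrier G. L z = {a} \<and> Vh z = phi (inv\<^bsub>G\<^esub> a) ` V z \<and> Wh z = phi (inv\<^bsub>G\<^esub> a) ` W z)) \<and>
     (\<forall>z\<in>Z. parabolic_pt G phi PP z \<longrightarrow>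
        (\<exists>g\<in>carrier G. \<exists>p\<in>PP. z = phi g p \<and>
           (\<exists>F. finite F \<and> L z = (g <#\<^bsub>G\<^esub> stab G phi p) - F) \<and>
           Vh z \<subseteq> Wh z \<and> Wh z \<subseteq> UNIV - {p} \<and> p \<notin> Ncl \<epsilon> (Wh z))) \<and>
     (\<Union>z\<in>Z. V z) = UNIV \<and>
     (\<forall>z\<in>Z. diameter (W z) < \<epsilon>) \<and>
     (\<forall>z\<in>Z. diameter (Wh z) > 4 * \<epsilon>) \<and>
     (\<forall>z\<in>Z. Ncl (2 * \<epsilon>) (Vh z) \<subseteq> Wh z) \<and>
     (\<forall>z\<in>Z. W z = {z} \<union> (\<Union>a\<in>L z. phi a ` Wh z)) \<and>
     (\<forall>z\<in>Z. V z = {z} \<union> (\<Union>a\<in>L z. phi a ` Vh z) \<and> closure (V z) \<subseteq> W z) \<and>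
     (\<forall>y\<in>Z. \<forall>z\<in>Z. (closure (Vh z) \<inter> closure (V y) = {}) \<longleftrightarrow> (Vh z \<inter> V y = {}))"

text \<open>Edges of the automaton: an edge from z to y with label a exists iff
  z, y in Z, a in L z and Vh z meets V y (one edge per label).\<close>
definition is_edge :: "'b set \<Rightarrow> ('b \<Rightarrow> 'g set) \<Rightarrow> ('b \<Rightarrow> 'b set) \<Rightarrow> ('b \<Rightarrow> 'b set)
     \<Rightarrow> 'b \<Rightarrow> 'g \<Rightarrow> 'b \<Rightarrow> bool" where
  "is_edge Z L V Vh z a y \<longleftrightarrow> z \<in> Z \<and> y \<in> Z \<and> a \<in> L z \<and> Vh z \<inter> V y \<noteq> {}"

text \<open>A strict coding, given by its vertex sequence zs (zs 0 = initial vertex of e_1,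
  zs k = terminal vertex of e_k) and label sequence as (as k = label of e_k, k \<ge> 1),
  of length N: N = \<infinity> is a strict conical coding (infinite edge path), N = n finite
  is a strict parabolic coding (edge path e_1..e_n ending at a parabolic vertex).\<close>
definition strict_coding ::
  "('g, 'm) monoid_scheme \<Rightarrow> ('g \<Rightarrow> 'b \<Rightarrow> 'b) \<Rightarrow> 'b set \<Rightarrow> 'b set \<Rightarrow> ('b \<Rightarrow> 'g set)
     \<Rightarrow> ('b \<Rightarrow> 'b set) \<Rightarrow> ('b \<Rightarrow> 'b set) \<Rightarrow> enat \<Rightarrow> (nat \<Rightarrow> 'b) \<Rightarrow> (nat \<Rightarrow> 'g) \<Rightarrow> bool" where
  "strict_coding G phi PP Z L V Vh N zs as \<longleftrightarrow>
     zs 0 \<in> Z \<and>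
     (\<forall>k. enat (Suc k) \<le> N \<longrightarrow> is_edge Z L V Vh (zs k) (as (Suc k)) (zs (Suc k))) \<and>
     (\<forall>n. N = enat n \<longrightarrow> parabolic_pt G phi PP (zs n))"

primrec qgseq :: "('g, 'm) monoid_scheme \<Rightarrow> 'g \<Rightarrow> (nat \<Rightarrow> 'g) \<Rightarrow> nat \<Rightarrow> 'g" where
  "qgseq G g0 as 0 = g0"
| "qgseq G g0 as (Suc k) = qgseq G g0 as k \<otimes>\<^bsub>G\<^esub> as (Suc k)"

end

theory Submission
  imports Defs
begin

theorem mainTheorem9:
  fixes G :: "('g, 'm) monoid_scheme" and phi :: "'g \<Rightarrow> 'b::metric_space \<Rightarrow> 'b"
    and PP :: "'b set" and D DPi \<epsilon> :: real and K :: "'b \<Rightarrow> 'b set"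
    and Z :: "'b set" and L :: "'b \<Rightarrow> 'g set" and V W Vh Wh :: "'b \<Rightarrow> 'b set"
    and g0 :: 'g and N :: enat and zs :: "nat \<Rightarrow> 'b" and as :: "nat \<Rightarrow> 'g"
  assumes "boundary_setup G phi PP D K DPi"
    and "automaton_data G phi PP D DPi \<epsilon> Z L V W Vh Wh"
    and "g0 \<in> carrier G"
    and "strict_coding G phi PP Z L V Vh N zs as"
  shows "(\<forall>k. enat (Suc k) \<le> N \<longrightarrow>
            phi (qgseq G g0 as (Suc k)) ` W (zs (Suc k)) \<subset> phi (qgseq G g0 as k) ` W (zs k))
       \<and> (\<forall>g. finite {k. enat k \<le> N \<and> qgseq G g0 as k = g}
              \<and> card {k. enat k \<le> N \<and> qgseq G g0 as k = g} \<le> card Z)"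
proof -
  have grp: "group G" using assms(1) unfolding boundary_setup_def by (elim conjE) assumption
  have ga: "group_action G UNIV phi" using assms(1) unfolding boundary_setup_def by (elim conjE) assumption
  have cpt: "compact (UNIV::'b set)" using assms(1) unfolding boundary_setup_def by (elim conjE) assumption
  have bnd: "bounded (S::'b set)" for S
    using bounded_subset[OF compact_imp_bounded[OF cpt]] by blast
  note AD = assms(2)[unfolded automaton_data_def]
  have eps: "\<epsilon> > 0" using AD by (elim conjE) assumption
  have fZ: "finite Z" using AD by (elim conjE) assumption
  have a5: "\<forall>z\<in>Z. open (V z) \<and> open (W z) \<and> open (Vh z) \<and> open (Wh z) \<and> L z \<subseteq> carrier G"
    using AD by (elim conjE) assumption
  have a9: "\<forall>z\<in>Z. diameter (W z) < \<epsilon>" using AD by (elim conjE) assumption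
  have a10: "\<forall>z\<in>Z. diameter (Wh z) > 4 * \<epsilon>" using AD by (elim conjE) assumption
  have a11: "\<forall>z\<in>Z. Ncl (2 * \<epsilon>) (Vh z) \<subseteq> Wh z" using AD by (elim conjE) assumption
  have a12: "\<forall>z\<in>Z. W z = {z} \<union> (\<Union>a\<in>L z. phi a ` Wh z)" using AD by (elim conjE) assumption
  have a13: "\<forall>z\<in>Z. V z = {z} \<union> (\<Union>a\<in>L z. phi a ` Vh z) \<and> closure (V z) \<subseteq> W z"
    using AD by (elim conjE) assumption
  have LG: "z \<in> Z \<Longrightarrow> L z \<subseteq> carrier G" for z using a5 by blast
  have diamW: "z \<in> Z \<Longrightarrow> diameter (W z) < \<epsilon>" for z using a9 by blast
  have diamWh: "z \<in> Z \<Longrightarrow> diameter (Wh z) > 4 * \<epsilon>" for z using a10 by blast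
  have Ncl: "z \<in> Z \<Longrightarrow> Ncl (2 * \<epsilon>) (Vh z) \<subseteq> Wh z" for z using a11 by blast
  have Weq: "z \<in> Z \<Longrightarrow> W z = {z} \<union> (\<Union>a\<in>L z. phi a ` Wh z)" for z using a12 by blast
  have VW: "z \<in> Z \<Longrightarrow> V z \<subseteq> W z" for z using a13 closure_subset by blast
  note SC = assms(4)[unfolded strict_coding_def]
  have s0: "zs 0 \<in> Z" using SC by (elim conjE) assumption
  have s1: "\<forall>k. enat (Suc k) \<le> N \<longrightarrow> is_edge Z L V Vh (zs k) (as (Suc k)) (zs (Suc k))"
    using SC by (elim conjE) assumption
  have edge: "enat (Suc k) \<le> N \<Longrightarrow> zs k \<in> Z \<and> zs (Suc k) \<in> Z \<and> as (Suc k) \<in> L (zs k)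
     \<and> Vh (zs k) \<inter> V (zs (Suc k)) \<noteq> {}" for k
    using s1 unfolding is_edge_def by blast
  have zsZ: "enat k \<le> N \<Longrightarrow> zs k \<in> Z" for k
  proof (cases k)
    case 0 then show ?thesis using s0 by simp
  next
    case (Suc m) then show "enat k \<le> N \<Longrightarrow> zs k \<in> Z" using edge[of m] by simp
  qed
  have qgG: "enat k \<le> N \<Longrightarrow> qgseq G g0 as k \<in> carrier G" for k
  proof (induction k)
    case 0 then show ?case using assms(3) by simp
  next
    case (Suc k)
    then have "enat k \<le> N" by (meson Suc_ile_eq order_less_imp_le)
    have "as (Suc k) \<in> carrier G" using edge[OF Suc.prems] LG by blast
    moreover have "qgseq G g0 as k \<in> carrier G" using Suc.IH \<open>enat k \<le> N\<close> by blast
    ultimately show ?case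
      using monoid.m_closed[OF group.is_monoid[OF grp]] by simp
  qed
  have img_comp: "a \<in> carrier G \<Longrightarrow> b \<in> carrier G \<Longrightarrow> phi (a \<otimes>\<^bsub>G\<^esub> b) ` S = phi a ` (phi b ` S)" for a b S
    using group_action.composition_rule[OF ga] by (auto simp: image_iff)
  have inj: "a \<in> carrier G \<Longrightarrow> inj (phi a)" for a
    using group_action.inj_prop[OF ga] by blast
  have step: "phi (qgseq G g0 as (Suc k)) ` W (zs (Suc k)) \<subset> phi (qgseq G g0 as k) ` W (zs k)"
    if k: "enat (Suc k) \<le> N" for k
  proof -
    let ?z = "zs k" and ?y = "zs (Suc k)" and ?a = "as (Suc k)"
    have kN: "enat k \<le> N" using k by (meson Suc_ile_eq order_less_imp_le)
    from edge[OF k] have z: "?z \<in> Z" and y: "?y \<in> Z" and a: "?a \<in> L ?z"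
      and ne: "Vh ?z \<inter> V ?y \<noteq> {}" by auto
    have aG: "?a \<in> carrier G" using a LG[OF z] by auto
    obtain p where p: "p \<in> Vh ?z" "p \<in> V ?y" using ne by auto
    have sub: "W ?y \<subseteq> Wh ?z"
    proof
      fix x assume x: "x \<in> W ?y"
      have "dist x p \<le> diameter (W ?y)"
        by (rule diameter_bounded_bound[OF bnd x]) (use p VW[OF y] in auto)
      then have "infdist x (Vh ?z) \<le> 2 * \<epsilon>"
        using infdist_le[OF p(1), of x] diamW[OF y] eps by linarith
      then have "x \<in> Ncl (2 * \<epsilon>) (Vh ?z)" using p unfolding Ncl_def by auto
      then show "x \<in> Wh ?z" using Ncl[OF z] by auto
    qed
    have neq: "W ?y \<noteq> Wh ?z" using diamW[OF y] diamWh[OF z] eps by auto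
    have s1: "phi ?a ` W ?y \<subset> phi ?a ` Wh ?z"
      using sub neq inj[OF aG] by (metis image_mono inj_image_eq_iff psubsetI)
    have s2: "phi ?a ` Wh ?z \<subseteq> W ?z" using Weq[OF z] a by auto
    have s3: "phi ?a ` W ?y \<subset> W ?z" using s1 s2 by blast
    have gk: "qgseq G g0 as k \<in> carrier G" using qgG[OF kN] .
    have "phi (qgseq G g0 as (Suc k)) ` W ?y = phi (qgseq G g0 as k) ` (phi ?a ` W ?y)"
      using img_comp[OF gk aG] by simp
    also have "\<dots> \<subset> phi (qgseq G g0 as k) ` W ?z"
      using s3 inj[OF gk] by (metis image_mono inj_image_eq_iff psubset_eq)
    finally show ?thesis .
  qed
  have chain: "enat j \<le> N \<Longrightarrow> i < j \<Longrightarrow>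
      phi (qgseq G g0 as j) ` W (zs j) \<subset> phi (qgseq G g0 as i) ` W (zs i)" for i j
  proof (induction j)
    case 0 then show ?case by simp
  next
    case (Suc j)
    have jN: "enat j \<le> N" using Suc.prems by (meson Suc_ile_eq order_less_imp_le)
    show ?case
    proof (cases "i = j")
      case True then show ?thesis using step[OF Suc.prems(1)] by simp
    next
      case False
      then have "i < j" using Suc.prems by auto
      then show ?thesis using Suc.IH[OF jN] step[OF Suc.prems(1)] by blast
    qed
  qed
  show ?thesis
  proof (intro conjI allI impI)
    fix k assume "enat (Suc k) \<le> N" then show
      "phi (qgseq G g0 as (Suc k)) ` W (zs (Suc k)) \<subset> phi (qgseq G g0 as k) ` W (zs k)"
      by (rule step)
  next
    fix g
    let ?S = "{k. enat k \<le> N \<and> qgseq G g0 as k = g}"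
    have injS: "inj_on zs ?S"
    proof (rule inj_onI)
      fix i j assume i: "i \<in> ?S" and j: "j \<in> ?S" and e: "zs i = zs j"
      show "i = j"
      proof (rule ccontr)
        assume "i \<noteq> j"
        then consider "i < j" | "j < i" by linarith
        then show False
        proof cases
          case 1 then show False using chain[of j i] i j e by auto
        next
          case 2 then show False using chain[of i j] i j e by auto
        qed
      qed
    qed
    have imZ: "zs ` ?S \<subseteq> Z" using zsZ by auto
    show "finite ?S" using injS imZ fZ finite_imageD finite_subset by blast
    show "card ?S \<le> card Z"
      using card_image[OF injS] card_mono[OF fZ imZ] by simp
  qed
qed

end
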